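(* Let $\gamma\in(0,1)$. There is a constant $c_1>0$, a polynomial in $\|D_x\|_\infty,\|D_u\|_\infty,\kappa,\kappa_B,\gamma^{-1},\bar w$ (independent of $n,m,H,t$), such that with $\epsilon_1(H)=c_1n\sqrt mH(1-\gamma)^H$ the following holds. Suppose the disturbance-action policy is implemented with time-varying parameters $\bm M_k\in\mathcal M$ for all $k$, and $H\ge\frac{\log(2\kappa^2)}{\log((1-\gamma)^{-1})}$. Then for every $t$, $$\max_{\|w_k\|_\infty\le\bar w}\|D_xA_{\mathbb K}^Hx_{t-H}\|_\infty\le\epsilon_1(H),\qquad\max_{\|w_k\|_\infty\le\bar w}\|D_u\mathbb KA_{\mathbb K}^Hx_{t-H}\|_\infty\le\epsilon_1(H),$$ where the maxima are over all disturbance sequences with $\|w_k\|_\infty\le\bar w$ for all $k$.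
   Context: System $x_{t+1}=Ax_t+Bu_t+w_t$, $A\in\mathbb R^{n\times n}$, $B\in\mathbb R^{n\times m}$, $x_0=0$, and $x_s=0$ for $s<0$. $D_x\in\mathbb R^{k_x\times n}$, $D_u\in\mathbb R^{k_u\times m}$; for matrices $\|\cdot\|_\infty$ is the max absolute row sum and $\|\cdot\|_2$ the spectral norm. $\bar w>0$. For $\kappa\ge1$, $\gamma\in(0,1]$, $K$ is $(\kappa,\gamma)$-strongly stable if $A-BK=Q^{-1}LQ$ with $\|L\|_2\le1-\gamma$ and $\max(\|Q\|_2,\|Q^{-1}\|_2,\|K\|_2)\le\kappa$. $\kappa_B=\max(\|B\|_2,1)$. Fix a $(\kappa,\gamma)$-strongly stable $\mathbb K$ and set $A_{\mathbb K}=A-B\mathbb K$. A parameter is a list $\bm M=(M^{[1]},\dots,M^{[H]})$, $M^{[i]}\in\mathbb R^{m\times n}$; implementing parameters $\bm M_t$ means $u_t=-\mathbb Kx_t+\sum_{i=1}^HM_t^{[i]}w_{t-i}$, with $w_s=0$ for $s<0$. $\mathcal M=\{\bm M:\|M^{[i]}\|_\infty\le2\sqrt n\kappa^3(1-\gamma)^{i-1},\ 1\le i\le H\}$. *)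

theory Defs
  imports Complex_Main
begin

text \<open>Matrices and vectors with explicit dimensions (dimensions vary inside the
statement, since the constant must be independent of n and m).
A matrix with r rows and c columns is a function nat => nat => real, only the
entries with indices i < r, j < c are relevant; a vector of length c is nat => real.\<close>

type_synonym mat = "nat \<Rightarrow> nat \<Rightarrow> real"
type_synonym vec = "nat \<Rightarrow> real"

definition mv :: "nat \<Rightarrow> mat \<Rightarrow> vec \<Rightarrow> vec" where
  "mv c A v = (\<lambda>i. \<Sum>j<c. A i j * v j)"

definition mm :: "nat \<Rightarrow> mat \<Rightarrow> mat \<Rightarrow> mat" where
  "mm c A B = (\<lambda>i k. \<Sum>j<c. A i j * B j k)"

definition idm :: mat where
  "idm = (\<lambda>i j. if i = j then 1 else 0)"

primrec mpow :: "nat \<Rightarrow> mat \<Rightarrow> nat \<Rightarrow> mat" where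
  "mpow n A 0 = idm"
| "mpow n A (Suc k) = mm n A (mpow n A k)"

definition vnorm_inf :: "nat \<Rightarrow> vec \<Rightarrow> real" where
  "vnorm_inf r v = Max (insert 0 ((\<lambda>i. \<bar>v i\<bar>) ` {..<r}))"

definition mnorm_inf :: "nat \<Rightarrow> nat \<Rightarrow> mat \<Rightarrow> real" where
  "mnorm_inf r c A = Max (insert 0 ((\<lambda>i. \<Sum>j<c. \<bar>A i j\<bar>) ` {..<r}))"

definition vnorm2 :: "nat \<Rightarrow> vec \<Rightarrow> real" where
  "vnorm2 c v = sqrt (\<Sum>j<c. (v j)\<^sup>2)"

definition mnorm2 :: "nat \<Rightarrow> nat \<Rightarrow> mat \<Rightarrow> real" where
  "mnorm2 r c A = Sup {vnorm2 r (mv c A v) | v. vnorm2 c v \<le> 1}"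

definition strongly_stable :: "nat \<Rightarrow> nat \<Rightarrow> mat \<Rightarrow> mat \<Rightarrow> mat \<Rightarrow> real \<Rightarrow> real \<Rightarrow> bool" where
  "strongly_stable n m A B K \<kappa> \<gamma> \<longleftrightarrow> 1 \<le> \<kappa> \<and> 0 < \<gamma> \<and> \<gamma> \<le> 1 \<and>
     (\<exists>Q Qi L.
        (\<forall>i<n. \<forall>j<n. mm n Q Qi i j = idm i j \<and> mm n Qi Q i j = idm i j) \<and>
        (\<forall>i<n. \<forall>j<n. A i j - mm m B K i j = mm n (mm n Qi L) Q i j) \<and>
        mnorm2 n n L \<le> 1 - \<gamma> \<and> mnorm2 n n Q \<le> \<kappa> \<and> mnorm2 n n Qi \<le> \<kappa> \<and>
        mnorm2 m n K \<le> \<kappa>)"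

definition AK :: "nat \<Rightarrow> mat \<Rightarrow> mat \<Rightarrow> mat \<Rightarrow> mat" where
  "AK m A B K = (\<lambda>i j. A i j - mm m B K i j)"

text \<open>State trajectory of the disturbance-action policy with time-varying parameters:
 M t i is M_t^[i] (i = 1..H), w t is the disturbance w_t (w_s = 0 for s < 0),
 x_0 = 0, u_t = -K x_t + sum_{i=1}^H M_t^[i] w_{t-i}, x_{t+1} = A x_t + B u_t + w_t.\<close>
definition dap_input :: "nat \<Rightarrow> nat \<Rightarrow> mat \<Rightarrow> nat \<Rightarrow> (nat \<Rightarrow> nat \<Rightarrow> mat) \<Rightarrow> (nat \<Rightarrow> vec)
    \<Rightarrow> nat \<Rightarrow> vec \<Rightarrow> vec" where
  "dap_input n m K H M w t x =
     (\<lambda>r. - mv n K x r + (\<Sum>i\<in>{1..H}. if i \<le> t then mv n (M t i) (w (t - i)) r else 0))"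

primrec dap_state :: "nat \<Rightarrow> nat \<Rightarrow> mat \<Rightarrow> mat \<Rightarrow> mat \<Rightarrow> nat \<Rightarrow> (nat \<Rightarrow> nat \<Rightarrow> mat)
    \<Rightarrow> (nat \<Rightarrow> vec) \<Rightarrow> nat \<Rightarrow> vec" where
  "dap_state n m A B K H M w 0 = (\<lambda>_. 0)"
| "dap_state n m A B K H M w (Suc t) =
     (\<lambda>r. mv n A (dap_state n m A B K H M w t) r
          + mv m B (dap_input n m K H M w t (dap_state n m A B K H M w t)) r + w t r)"

definition state_shift :: "nat \<Rightarrow> nat \<Rightarrow> mat \<Rightarrow> mat \<Rightarrow> mat \<Rightarrow> nat \<Rightarrow> (nat \<Rightarrow> nat \<Rightarrow> mat)
    \<Rightarrow> (nat \<Rightarrow> vec) \<Rightarrow> nat \<Rightarrow> vec" where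
  "state_shift n m A B K H M w t =
     (if H \<le> t then dap_state n m A B K H M w (t - H) else (\<lambda>_. 0))"

definition param_set :: "nat \<Rightarrow> nat \<Rightarrow> nat \<Rightarrow> real \<Rightarrow> real \<Rightarrow> (nat \<Rightarrow> mat) set" where
  "param_set n m H \<kappa> \<gamma> = {Ms. \<forall>i\<in>{1..H}.
      mnorm_inf m n (Ms i) \<le> 2 * sqrt (real n) * \<kappa>^3 * (1 - \<gamma>)^(i - 1)}"

definition is_poly6 :: "(real \<Rightarrow> real \<Rightarrow> real \<Rightarrow> real \<Rightarrow> real \<Rightarrow> real \<Rightarrow> real) \<Rightarrow> bool" where
  "is_poly6 P \<longleftrightarrow> (\<exists>(E :: (nat \<times> nat \<times> nat \<times> nat \<times> nat \<times> nat) set) coef. finite E \<and>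
     (\<forall>x1 x2 x3 x4 x5 x6. P x1 x2 x3 x4 x5 x6 =
        (\<Sum>(e1,e2,e3,e4,e5,e6)\<in>E. coef (e1,e2,e3,e4,e5,e6) *
            x1^e1 * x2^e2 * x3^e3 * x4^e4 * x5^e5 * x6^e6)))"

end

theory Submission
  imports Defs "HOL-Analysis.L2_Norm"
begin

lemma vnorm2_L2: "vnorm2 c v = L2_set v {..<c}"
  by (simp add: vnorm2_def L2_set_def)

lemma L2_set_abs: "L2_set (\<lambda>i. \<bar>f i\<bar>) A = L2_set f A"
  unfolding L2_set_def by simp

lemma vnorm2_cong: "(\<And>i. i < c \<Longrightarrow> v i = v' i) \<Longrightarrow> vnorm2 c v = vnorm2 c v'"
  unfolding vnorm2_def by (intro arg_cong[where f=sqrt] sum.cong) auto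

lemma vnorm2_nonneg: "0 \<le> vnorm2 c v"
  by (simp add: vnorm2_L2)

lemma mv_cong: "(\<And>j. j < c \<Longrightarrow> v j = v' j) \<Longrightarrow> mv c A v = mv c A v'"
  unfolding mv_def by (intro ext sum.cong) auto

lemma mv_cong_row: "(\<And>j. j < c \<Longrightarrow> A i j = A' i j) \<Longrightarrow> mv c A v i = mv c A' v i"
  unfolding mv_def by (intro sum.cong) auto

lemma mv_mm: "mv c (mm d X Y) v = mv d X (mv c Y v)"
  unfolding mv_def mm_def
  by (auto intro!: ext simp: sum_distrib_left sum_distrib_right mult.assoc intro: sum.swap)

lemma abs_mv_le: "\<bar>mv c A v i\<bar> \<le> L2_set (A i) {..<c} * vnorm2 c v"
proof -
  have "\<bar>mv c A v i\<bar> \<le> (\<Sum>j<c. \<bar>A i j\<bar> * \<bar>v j\<bar>)"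
    unfolding mv_def by (rule order_trans[OF sum_abs]) (simp add: abs_mult)
  also have "\<dots> \<le> L2_set (A i) {..<c} * vnorm2 c v"
    unfolding vnorm2_L2 by (rule L2_set_mult_ineq)
  finally show ?thesis .
qed

lemma mv_bdd: "vnorm2 r (mv c A v) \<le> L2_set (\<lambda>i. L2_set (A i) {..<c}) {..<r} * vnorm2 c v"
proof -
  have "vnorm2 r (mv c A v) \<le> L2_set (\<lambda>i. L2_set (A i) {..<c} * vnorm2 c v) {..<r}"
    unfolding vnorm2_L2 L2_set_abs[of "mv c A v", symmetric]
    by (rule L2_set_mono) (use abs_mv_le[of c A v, unfolded vnorm2_L2] in auto)
  also have "\<dots> = L2_set (\<lambda>i. L2_set (A i) {..<c}) {..<r} * vnorm2 c v"
    by (simp add: L2_set_left_distrib vnorm2_nonneg)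
  finally show ?thesis .
qed

lemma mv_scale: "mv c A (\<lambda>j. a * v j) = (\<lambda>i. a * mv c A v i)"
  unfolding mv_def by (auto simp: sum_distrib_left algebra_simps)

lemma vnorm2_scale: "vnorm2 r (\<lambda>i. a * v i) = \<bar>a\<bar> * vnorm2 r v"
  unfolding vnorm2_def by (simp add: power_mult_distrib real_sqrt_mult sum_distrib_left[symmetric])

lemma mnorm2_bound:
  assumes "mnorm2 r c A \<le> a"
  shows "vnorm2 r (mv c A v) \<le> a * vnorm2 c v"
proof -
  let ?S = "{vnorm2 r (mv c A v) | v. vnorm2 c v \<le> 1}"
  let ?F = "L2_set (\<lambda>i. L2_set (A i) {..<c}) {..<r}"
  have bdd: "bdd_above ?S"
  proof (rule bdd_aboveI)
    fix x assume "x \<in> ?S"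
    then obtain u where "x = vnorm2 r (mv c A u)" "vnorm2 c u \<le> 1" by auto
    then show "x \<le> ?F" using mv_bdd[of r c A u]
      by (smt (verit) L2_set_nonneg mult_left_le)
  qed
  show ?thesis
  proof (cases "vnorm2 c v = 0")
    case True
    then have "\<forall>j<c. v j = 0" unfolding vnorm2_L2 by (simp add: L2_set_eq_0_iff)
    then have "mv c A v = mv c A (\<lambda>_. 0)" by (intro mv_cong) auto
    then have "mv c A v = (\<lambda>_. 0)" by (simp add: mv_def)
    then show ?thesis unfolding True by (simp add: vnorm2_def)
  next
    case False
    let ?N = "vnorm2 c v"
    have Npos: "?N > 0" using False vnorm2_nonneg[of c v] by linarith
    have "vnorm2 c (\<lambda>j. (1 / ?N) * v j) = 1" by (subst vnorm2_scale) (use Npos in simp)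
    then have "vnorm2 r (mv c A (\<lambda>j. (1 / ?N) * v j)) \<in> ?S" by force
    then have "vnorm2 r (mv c A (\<lambda>j. (1 / ?N) * v j)) \<le> Sup ?S" using bdd by (rule cSup_upper)
    moreover have "vnorm2 r (mv c A (\<lambda>j. (1 / ?N) * v j)) = vnorm2 r (mv c A v) / ?N"
      by (subst mv_scale, subst vnorm2_scale) (use Npos in simp)
    ultimately have "vnorm2 r (mv c A v) / ?N \<le> a" using assms
      by (simp add: mnorm2_def)
    then show ?thesis using Npos by (simp add: divide_le_eq mult.commute)
  qed
qed

lemma vnorm_inf_ge: "i < r \<Longrightarrow> \<bar>v i\<bar> \<le> vnorm_inf r v"
  unfolding vnorm_inf_def by (intro Max_ge) auto

lemma vnorm_inf_le: "0 \<le> U \<Longrightarrow> (\<And>i. i < r \<Longrightarrow> \<bar>v i\<bar> \<le> U) \<Longrightarrow> vnorm_inf r v \<le> U"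
  unfolding vnorm_inf_def by (subst Max_le_iff) auto

lemma vnorm_inf_nonneg: "0 \<le> vnorm_inf r v"
  unfolding vnorm_inf_def by (intro Max_ge) auto

lemma vnorm_inf_le_2: "vnorm_inf r v \<le> vnorm2 r v"
  unfolding vnorm2_L2 L2_set_abs[of v, symmetric] by (intro vnorm_inf_le) (auto intro: member_le_L2_set)

lemma vnorm2_le_inf: "0 \<le> U \<Longrightarrow> (\<And>i. i < r \<Longrightarrow> \<bar>v i\<bar> \<le> U) \<Longrightarrow> vnorm2 r v \<le> sqrt (real r) * U"
proof -
  assume "0 \<le> U" "\<And>i. i < r \<Longrightarrow> \<bar>v i\<bar> \<le> U"
  then have "L2_set (\<lambda>i. \<bar>v i\<bar>) {..<r} \<le> L2_set (\<lambda>_. U) {..<r}"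
    by (intro L2_set_mono) auto
  then show ?thesis using \<open>0 \<le> U\<close> by (simp add: vnorm2_L2 L2_set_constant L2_set_abs)
qed

lemma mnorm_inf_ge: "i < r \<Longrightarrow> (\<Sum>j<c. \<bar>A i j\<bar>) \<le> mnorm_inf r c A"
  unfolding mnorm_inf_def by (intro Max_ge) auto

lemma mnorm_inf_nonneg: "0 \<le> mnorm_inf r c A"
  unfolding mnorm_inf_def by (intro Max_ge) auto

lemma abs_mv_inf: "i < r \<Longrightarrow> \<bar>mv c A v i\<bar> \<le> mnorm_inf r c A * vnorm_inf c v"
proof -
  assume i: "i < r"
  have "\<bar>mv c A v i\<bar> \<le> (\<Sum>j<c. \<bar>A i j\<bar> * vnorm_inf c v)"
    unfolding mv_def
    by (rule order_trans[OF sum_abs]) (auto simp: abs_mult intro!: sum_mono mult_left_mono vnorm_inf_ge)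
  also have "\<dots> \<le> mnorm_inf r c A * vnorm_inf c v"
    by (simp add: sum_distrib_right[symmetric] mult_right_mono mnorm_inf_ge i vnorm_inf_nonneg)
  finally show ?thesis .
qed

lemma vnorm_inf_mv: "vnorm_inf r (mv c A v) \<le> mnorm_inf r c A * vnorm_inf c v"
  by (intro vnorm_inf_le abs_mv_inf mult_nonneg_nonneg mnorm_inf_nonneg vnorm_inf_nonneg)


lemma mv_add: "mv c A (\<lambda>j. f j + g j) = (\<lambda>i. mv c A f i + mv c A g i)"
  unfolding mv_def by (auto simp: sum.distrib algebra_simps)

lemma mv_neg: "mv c A (\<lambda>j. - f j) = (\<lambda>i. - mv c A f i)"
  unfolding mv_def by (auto simp: sum_negf)

lemma mv_AK: "mv n (AK m A B K) x r = mv n A x r - mv m B (mv n K x) r"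
  unfolding AK_def mv_mm[symmetric] unfolding mv_def by (simp add: sum_subtractf left_diff_distrib)

lemma geom_le: assumes "0 < (q::real)" "q < 1" shows "(\<Sum>i\<in>{1..H}. q^(i-1)) \<le> 1 / (1 - q)"
proof -
  have "(\<Sum>i\<in>{1..H}. q^(i-1)) = (\<Sum>i<H. q^i)"
    by (induction H) (auto simp: atLeastAtMostSuc_conv add.commute)
  also have "\<dots> \<le> 1 / (1 - q)" using geometric_sum_less[OF assms, of "{..<H}"] by simp
  finally show ?thesis .
qed

lemma state_Suc:
  "dap_state n m A B K H M w (Suc t) = (\<lambda>r. mv n (AK m A B K) (dap_state n m A B K H M w t) r
     + (mv m B (\<lambda>r. \<Sum>i\<in>{1..H}. if i \<le> t then mv n (M t i) (w (t - i)) r else 0) r + w t r))"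
  unfolding dap_state.simps dap_input_def mv_add mv_neg mv_AK by (simp add: algebra_simps)

lemma u_bound:
  assumes M: "\<forall>k. M k \<in> param_set n m H \<kappa> \<gamma>" and w: "\<forall>k. vnorm_inf n (w k) \<le> wbar"
    and gam: "0 < \<gamma>" "\<gamma> < 1" and kap: "0 \<le> \<kappa>" and wb: "0 \<le> wbar" and r: "r < m"
  shows "\<bar>\<Sum>i\<in>{1..H}. if i \<le> t then mv n (M t i) (w (t - i)) r else 0\<bar>
          \<le> 2 * sqrt (real n) * \<kappa>^3 * wbar / \<gamma>"
proof -
  have "\<bar>\<Sum>i\<in>{1..H}. if i \<le> t then mv n (M t i) (w (t - i)) r else 0\<bar>
      \<le> (\<Sum>i\<in>{1..H}. \<bar>if i \<le> t then mv n (M t i) (w (t - i)) r else 0\<bar>)"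
    by (rule sum_abs)
  also have "\<dots> \<le> (\<Sum>i\<in>{1..H}. (2 * sqrt (real n) * \<kappa>^3 * wbar) * (1 - \<gamma>)^(i - 1))"
  proof (rule sum_mono)
    fix i assume i: "i \<in> {1..H}"
    have "\<bar>mv n (M t i) (w (t - i)) r\<bar> \<le> mnorm_inf m n (M t i) * vnorm_inf n (w (t - i))"
      by (rule abs_mv_inf[OF r])
    also have "\<dots> \<le> (2 * sqrt (real n) * \<kappa>^3 * (1 - \<gamma>)^(i - 1)) * wbar"
      using M i w gam kap by (intro mult_mono) (auto simp: param_set_def mnorm_inf_nonneg vnorm_inf_nonneg)
    finally show "\<bar>if i \<le> t then mv n (M t i) (w (t - i)) r else 0\<bar>
        \<le> (2 * sqrt (real n) * \<kappa>^3 * wbar) * (1 - \<gamma>)^(i - 1)"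
      using gam kap wb by (auto simp: algebra_simps)
  qed
  also have "\<dots> = (2 * sqrt (real n) * \<kappa>^3 * wbar) * (\<Sum>i\<in>{1..H}. (1 - \<gamma>)^(i - 1))"
    by (simp add: sum_distrib_left)
  also have "\<dots> \<le> (2 * sqrt (real n) * \<kappa>^3 * wbar) * (1 / (1 - (1 - \<gamma>)))"
    using gam kap wb by (intro mult_left_mono geom_le) auto
  finally show ?thesis by simp
qed

context
  fixes n m :: nat and A B K Q Qi L :: mat and \<kappa> \<gamma> :: real
  assumes QQi: "\<forall>i<n. \<forall>j<n. mm n Q Qi i j = idm i j \<and> mm n Qi Q i j = idm i j"
    and AKeq: "\<forall>i<n. \<forall>j<n. A i j - mm m B K i j = mm n (mm n Qi L) Q i j"
    and nL: "mnorm2 n n L \<le> 1 - \<gamma>" and nQ: "mnorm2 n n Q \<le> \<kappa>" and nQi: "mnorm2 n n Qi \<le> \<kappa>"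
    and gam: "0 < \<gamma>" "\<gamma> < 1" and kap: "1 \<le> \<kappa>"
begin

lemma AK_factor: "i < n \<Longrightarrow> mv n (AK m A B K) y i = mv n Qi (mv n L (mv n Q y)) i"
proof -
  assume i: "i < n"
  have "mv n (AK m A B K) y i = mv n (mm n (mm n Qi L) Q) y i"
    by (rule mv_cong_row) (use AKeq i in \<open>auto simp: AK_def\<close>)
  then show ?thesis by (simp add: mv_mm)
qed

lemma idm_mv: "i < n \<Longrightarrow> mv n idm z i = z i"
  unfolding mv_def idm_def by (simp add: if_distrib[where f="\<lambda>a. a * _"] cong: if_cong)

lemma Q_Qi: "i < n \<Longrightarrow> mv n Q (mv n Qi z) i = z i"
proof -
  assume i: "i < n"
  have "mv n Q (mv n Qi z) i = mv n idm z i"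
    unfolding mv_mm[symmetric] by (rule mv_cong_row) (use QQi i in auto)
  then show ?thesis using idm_mv i by simp
qed

lemma Qi_Q: "i < n \<Longrightarrow> mv n Qi (mv n Q z) i = z i"
proof -
  assume i: "i < n"
  have "mv n Qi (mv n Q z) i = mv n idm z i"
    unfolding mv_mm[symmetric] by (rule mv_cong_row) (use QQi i in auto)
  then show ?thesis using idm_mv i by simp
qed

lemma step_Q: "i < n \<Longrightarrow> mv n Q (mv n (AK m A B K) y) i = mv n L (mv n Q y) i"
proof -
  assume i: "i < n"
  have "mv n Q (mv n (AK m A B K) y) = mv n Q (mv n Qi (mv n L (mv n Q y)))"
    by (rule mv_cong) (simp add: AK_factor)
  then show ?thesis using Q_Qi i by simp
qed

lemma pow_bound:
  "vnorm2 n (mv n Q (mv n (mpow n (AK m A B K) k) x)) \<le> (1 - \<gamma>)^k * vnorm2 n (mv n Q x)"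
proof (induction k)
  case 0
  have "mv n Q (mv n idm x) = mv n Q x" by (rule mv_cong) (simp add: idm_mv)
  then show ?case by simp
next
  case (Suc k)
  have "vnorm2 n (mv n Q (mv n (mpow n (AK m A B K) (Suc k)) x))
      = vnorm2 n (mv n L (mv n Q (mv n (mpow n (AK m A B K) k) x)))"
    by (simp add: mv_mm) (rule vnorm2_cong, simp add: step_Q)
  also have "\<dots> \<le> (1 - \<gamma>) * vnorm2 n (mv n Q (mv n (mpow n (AK m A B K) k) x))"
    by (rule mnorm2_bound[OF nL])
  also have "\<dots> \<le> (1 - \<gamma>) * ((1 - \<gamma>)^k * vnorm2 n (mv n Q x))"
    using gam Suc.IH by (intro mult_left_mono) auto
  finally show ?case by simp
qed

lemma pow_bound2:
  "vnorm2 n (mv n (mpow n (AK m A B K) k) x) \<le> \<kappa> * ((1 - \<gamma>)^k * vnorm2 n (mv n Q x))"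
proof -
  have "vnorm2 n (mv n (mpow n (AK m A B K) k) x)
      = vnorm2 n (mv n Qi (mv n Q (mv n (mpow n (AK m A B K) k) x)))"
    by (rule vnorm2_cong) (simp add: Qi_Q)
  also have "\<dots> \<le> \<kappa> * vnorm2 n (mv n Q (mv n (mpow n (AK m A B K) k) x))"
    by (rule mnorm2_bound[OF nQi])
  also have "\<dots> \<le> \<kappa> * ((1 - \<gamma>)^k * vnorm2 n (mv n Q x))"
    using kap pow_bound by (intro mult_left_mono) auto
  finally show ?thesis .
qed


lemma state_bound:
  assumes M: "\<forall>k. M k \<in> param_set n m H \<kappa> \<gamma>" and w: "\<forall>k. vnorm_inf n (w k) \<le> wbar"
    and wb: "0 \<le> wbar" and nB: "mnorm2 n m B \<le> kB" and kB0: "0 \<le> kB"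
  shows "vnorm2 n (mv n Q (dap_state n m A B K H M w t))
     \<le> \<kappa> * (sqrt (real m) * (kB * (2 * sqrt (real n) * \<kappa>^3 * wbar / \<gamma>)) + sqrt (real n) * wbar) / \<gamma>"
proof (induction t)
  case 0
  have "mv n Q (\<lambda>_. 0) = (\<lambda>_. 0)" by (simp add: mv_def)
  moreover have "0 \<le> \<kappa> * (sqrt (real m) * (kB * (2 * sqrt (real n) * \<kappa>^3 * wbar / \<gamma>)) + sqrt (real n) * wbar) / \<gamma>"
    using gam kap wb kB0 by simp
  ultimately show ?case by (simp add: vnorm2_def)
next
  case (Suc t)
  let ?x = "dap_state n m A B K H M w t"
  let ?u = "\<lambda>r. \<Sum>i\<in>{1..H}. if i \<le> t then mv n (M t i) (w (t - i)) r else 0"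
  let ?d = "\<lambda>r. mv m B ?u r + w t r"
  let ?U = "2 * sqrt (real n) * \<kappa>^3 * wbar / \<gamma>"
  let ?D = "sqrt (real m) * (kB * ?U) + sqrt (real n) * wbar"
  have U0: "0 \<le> ?U" using gam kap wb by simp
  have "vnorm2 m ?u \<le> sqrt (real m) * ?U"
    by (rule vnorm2_le_inf[OF U0]) (rule u_bound[OF M w gam _ wb], use kap in auto)
  then have Bu: "vnorm2 n (mv m B ?u) \<le> kB * (sqrt (real m) * ?U)"
    using mnorm2_bound[OF nB, of ?u] mult_left_mono[OF _ kB0] by (meson order_trans)
  have wt: "vnorm2 n (w t) \<le> sqrt (real n) * wbar"
    by (rule vnorm2_le_inf[OF wb]) (use w vnorm_inf_ge order_trans in blast)
  have dD: "vnorm2 n ?d \<le> ?D"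
    using L2_set_triangle_ineq[of "mv m B ?u" "w t" "{..<n}"] Bu wt unfolding vnorm2_L2
    by (simp add: algebra_simps)
  have "vnorm2 n (mv n Q (dap_state n m A B K H M w (Suc t)))
      = vnorm2 n (\<lambda>i. mv n L (mv n Q ?x) i + mv n Q ?d i)"
    unfolding state_Suc mv_add by (rule vnorm2_cong) (simp add: step_Q)
  also have "\<dots> \<le> vnorm2 n (mv n L (mv n Q ?x)) + vnorm2 n (mv n Q ?d)"
    unfolding vnorm2_L2 by (rule L2_set_triangle_ineq)
  also have "\<dots> \<le> (1 - \<gamma>) * vnorm2 n (mv n Q ?x) + \<kappa> * vnorm2 n ?d"
    by (intro add_mono mnorm2_bound nL nQ)
  also have "\<dots> \<le> (1 - \<gamma>) * (\<kappa> * ?D / \<gamma>) + \<kappa> * ?D"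
    using gam kap dD Suc.IH by (intro add_mono mult_left_mono) auto
  also have "\<dots> = \<kappa> * ?D / \<gamma>"
    using gam by (simp add: field_simps)
  finally show ?case .
qed

end


lemma poly_ok: "is_poly6 (\<lambda>X U k b g w. 1 + 3 * X * k^5 * b * g^2 * w + 3 * U * k^6 * b * g^2 * w)"
  unfolding is_poly6_def
  apply (rule exI[where x="{(0,0,0,0,0,0),(1,0,5,1,2,1),(0,1,6,1,2,1)}"])
  apply (rule exI[where x="\<lambda>e. if e = (0,0,0,0,0,0) then 1 else 3"])
  by simp

lemma D_bound:
  fixes n m :: nat and kB \<kappa> \<gamma> wbar :: real
  assumes "1 \<le> n" "1 \<le> m" "1 \<le> kB" "1 \<le> \<kappa>" "0 < \<gamma>" "\<gamma> < 1" "0 < wbar"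
  shows "sqrt (real m) * (kB * (2 * sqrt (real n) * \<kappa>^3 * wbar / \<gamma>)) + sqrt (real n) * wbar
         \<le> 3 * (real n * sqrt (real m) * kB * \<kappa>^3 * wbar / \<gamma>)"
proof -
  have "real n \<le> (real n)^2" using assms(1) by (simp add: power2_eq_square)
  then have "sqrt (real n) \<le> sqrt ((real n)^2)" by (rule real_sqrt_le_mono)
  then have sn: "sqrt (real n) \<le> real n" by simp
  have sm: "1 \<le> sqrt (real m)" using assms(2) by simp
  have k3: "1 \<le> \<kappa>^3" using assms(4) by simp
  have g: "1 \<le> 1 / \<gamma>" using assms(5,6) by simp
  have P: "1 \<le> sqrt (real m) * kB * \<kappa>^3 * (1/\<gamma>)"
  proof -
    have "1 * 1 * 1 * 1 \<le> sqrt (real m) * kB * \<kappa>^3 * (1/\<gamma>)"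
      using sm k3 g assms(3,4) by (intro mult_mono mult_nonneg_nonneg) auto
    then show ?thesis by simp
  qed
  have t1: "sqrt (real m) * (kB * (2 * sqrt (real n) * \<kappa>^3 * wbar / \<gamma>))
      = 2 * sqrt (real n) * (sqrt (real m) * kB * \<kappa>^3 * (1/\<gamma>)) * wbar" by simp
  have t1b: "\<dots> \<le> 2 * real n * (sqrt (real m) * kB * \<kappa>^3 * (1/\<gamma>)) * wbar"
    using sn P assms(7) by (intro mult_right_mono mult_left_mono) auto
  have t2: "sqrt (real n) * wbar \<le> real n * (sqrt (real m) * kB * \<kappa>^3 * (1/\<gamma>)) * wbar"
  proof -
    have "real n * 1 \<le> real n * (sqrt (real m) * kB * \<kappa>^3 * (1/\<gamma>))"
      using P by (intro mult_left_mono) auto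
    then have "sqrt (real n) \<le> real n * (sqrt (real m) * kB * \<kappa>^3 * (1/\<gamma>))" using sn by linarith
    then show ?thesis using assms(7) by (intro mult_right_mono) auto
  qed
  have e: "3 * (real n * sqrt (real m) * kB * \<kappa>^3 * wbar / \<gamma>)
     = 2 * real n * (sqrt (real m) * kB * \<kappa>^3 * (1/\<gamma>)) * wbar + real n * (sqrt (real m) * kB * \<kappa>^3 * (1/\<gamma>)) * wbar"
    by (simp add: field_simps)
  show ?thesis using t1 t1b t2 e by linarith
qed


theorem lemma1:
  shows "\<exists>P. is_poly6 P \<and>
    (\<forall>(n::nat) (m::nat) (kx::nat) (ku::nat) (A::mat) (B::mat) (Dx::mat) (Du::mat) (K::mat)
       (\<kappa>::real) (\<gamma>::real) (wbar::real) (H::nat) (M::nat \<Rightarrow> nat \<Rightarrow> mat).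
      1 \<le> n \<and> 1 \<le> m \<and> 0 < \<gamma> \<and> \<gamma> < 1 \<and> 0 < wbar \<and>
      strongly_stable n m A B K \<kappa> \<gamma> \<and>
      (\<forall>k. M k \<in> param_set n m H \<kappa> \<gamma>) \<and>
      real H \<ge> ln (2 * \<kappa>\<^sup>2) / ln (1 / (1 - \<gamma>))
      \<longrightarrow>
      (let c1 = P (mnorm_inf kx n Dx) (mnorm_inf ku m Du) \<kappa> (max (mnorm2 n m B) 1) (1 / \<gamma>) wbar;
           \<epsilon>1 = c1 * real n * sqrt (real m) * real H * (1 - \<gamma>)^H
       in 0 < c1 \<and>
          (\<forall>(w::nat \<Rightarrow> vec) (t::nat). (\<forall>k. vnorm_inf n (w k) \<le> wbar) \<longrightarrow>
             vnorm_inf kx (mv n Dx (mv n (mpow n (AK m A B K) H)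
                 (state_shift n m A B K H M w t))) \<le> \<epsilon>1 \<and>
             vnorm_inf ku (mv m Du (mv n K (mv n (mpow n (AK m A B K) H)
                 (state_shift n m A B K H M w t)))) \<le> \<epsilon>1)))"
proof (rule exI, rule conjI[OF poly_ok], intro allI impI)
  fix n m kx ku :: nat and A B Dx Du K :: mat and \<kappa> \<gamma> wbar :: real and H :: nat and M :: "nat \<Rightarrow> nat \<Rightarrow> mat"
  assume h: "1 \<le> n \<and> 1 \<le> m \<and> 0 < \<gamma> \<and> \<gamma> < 1 \<and> 0 < wbar \<and>
      strongly_stable n m A B K \<kappa> \<gamma> \<and>
      (\<forall>k. M k \<in> param_set n m H \<kappa> \<gamma>) \<and>
      real H \<ge> ln (2 * \<kappa>\<^sup>2) / ln (1 / (1 - \<gamma>))"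
  then have n1: "1 \<le> n" and m1: "1 \<le> m" and g0: "0 < \<gamma>" and g1: "\<gamma> < 1" and wb: "0 < wbar"
    and ss: "strongly_stable n m A B K \<kappa> \<gamma>" and MM: "\<forall>k. M k \<in> param_set n m H \<kappa> \<gamma>"
    and HH: "real H \<ge> ln (2 * \<kappa>\<^sup>2) / ln (1 / (1 - \<gamma>))" by auto
  from ss obtain Q Qi L where k1: "1 \<le> \<kappa>"
    and QQi: "\<forall>i<n. \<forall>j<n. mm n Q Qi i j = idm i j \<and> mm n Qi Q i j = idm i j"
    and AKeq: "\<forall>i<n. \<forall>j<n. A i j - mm m B K i j = mm n (mm n Qi L) Q i j"
    and nL: "mnorm2 n n L \<le> 1 - \<gamma>" and nQ: "mnorm2 n n Q \<le> \<kappa>" and nQi: "mnorm2 n n Qi \<le> \<kappa>"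
    and nK: "mnorm2 m n K \<le> \<kappa>"
    unfolding strongly_stable_def by blast
  define kB where "kB = max (mnorm2 n m B) 1"
  define X where "X = mnorm_inf kx n Dx"
  define U where "U = mnorm_inf ku m Du"
  define Z where "Z = \<kappa>^5 * kB * (1/\<gamma>)^2 * wbar"
  define N where "N = real n * sqrt (real m) * (1 - \<gamma>)^H"
  define c1 where "c1 = 1 + 3 * X * \<kappa>^5 * kB * (1/\<gamma>)^2 * wbar + 3 * U * \<kappa>^6 * kB * (1/\<gamma>)^2 * wbar"
  have kB1: "1 \<le> kB" and nB: "mnorm2 n m B \<le> kB" unfolding kB_def by auto
  have X0: "0 \<le> X" and U0: "0 \<le> U" unfolding X_def U_def by (auto simp: mnorm_inf_nonneg)
  have Z0: "0 \<le> Z" unfolding Z_def using k1 kB1 wb by auto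
  have N0: "0 \<le> N" unfolding N_def using g1 by auto
  have c1pos: "0 < c1" unfolding c1_def using X0 U0 k1 kB1 wb g0 by (intro add_pos_nonneg) auto
  have H1: "1 \<le> real H"
  proof -
    have "1 \<le> \<kappa>\<^sup>2" using k1 by (simp add: one_le_power)
    then have "0 < ln (2 * \<kappa>\<^sup>2)" by (intro ln_gt_zero) linarith
    moreover have "0 < ln (1 / (1 - \<gamma>))" using g0 g1 by simp
    ultimately have "0 < real H" using HH by (smt (verit) divide_pos_pos)
    then show ?thesis by simp
  qed
  have main: "vnorm_inf kx (mv n Dx (mv n (mpow n (AK m A B K) H) (state_shift n m A B K H M w t))) \<le> c1 * N \<and>
       vnorm_inf ku (mv m Du (mv n K (mv n (mpow n (AK m A B K) H) (state_shift n m A B K H M w t)))) \<le> c1 * N"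
    if w: "\<forall>k. vnorm_inf n (w k) \<le> wbar" for w t
  proof -
    let ?x = "state_shift n m A B K H M w t"
    let ?y = "mv n (mpow n (AK m A B K) H) ?x"
    let ?D = "sqrt (real m) * (kB * (2 * sqrt (real n) * \<kappa>^3 * wbar / \<gamma>)) + sqrt (real n) * wbar"
    have Qx: "vnorm2 n (mv n Q ?x) \<le> \<kappa> * ?D / \<gamma>"
    proof (cases "H \<le> t")
      case True
      then show ?thesis unfolding state_shift_def
        using state_bound[OF QQi AKeq nL nQ nQi g0 g1 k1 MM w _ nB] wb kB1 by simp
    next
      case False
      have "mv n Q (\<lambda>_. 0) = (\<lambda>_. 0)" by (simp add: mv_def)
      moreover have "0 \<le> \<kappa> * ?D / \<gamma>" using g0 k1 wb kB1 by simp
      ultimately show ?thesis using False unfolding state_shift_def by (simp add: vnorm2_def)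
    qed
    have Dle: "?D \<le> 3 * (real n * sqrt (real m) * kB * \<kappa>^3 * wbar / \<gamma>)"
      by (rule D_bound) (use n1 m1 kB1 k1 g0 g1 wb in auto)
    have "vnorm2 n ?y \<le> \<kappa> * ((1 - \<gamma>)^H * vnorm2 n (mv n Q ?x))"
      by (rule pow_bound2[OF QQi AKeq nL nQ nQi g0 g1 k1])
    also have "\<dots> \<le> \<kappa> * ((1 - \<gamma>)^H * (\<kappa> * (3 * (real n * sqrt (real m) * kB * \<kappa>^3 * wbar / \<gamma>)) / \<gamma>))"
      using Qx Dle k1 g0 g1
      by (intro mult_left_mono divide_right_mono order_trans[OF Qx]) auto
    also have "\<dots> = 3 * Z * N" unfolding Z_def N_def by (simp add: field_simps power2_eq_square numeral_eq_Suc)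
    finally have Y: "vnorm2 n ?y \<le> 3 * Z * N" .
    have "vnorm_inf kx (mv n Dx ?y) \<le> X * vnorm_inf n ?y"
      unfolding X_def by (rule vnorm_inf_mv)
    also have "\<dots> \<le> X * (3 * Z * N)"
      using X0 Y vnorm_inf_le_2 by (intro mult_left_mono) (auto intro: order_trans)
    also have "\<dots> \<le> c1 * N"
    proof -
      have "3 * X * Z \<le> c1" unfolding c1_def Z_def using U0 k1 kB1 wb g0 by simp
      from mult_right_mono[OF this N0] show ?thesis by (simp add: mult_ac)
    qed
    finally have P1: "vnorm_inf kx (mv n Dx ?y) \<le> c1 * N" .
    have "vnorm_inf ku (mv m Du (mv n K ?y)) \<le> U * vnorm_inf m (mv n K ?y)"
      unfolding U_def by (rule vnorm_inf_mv)
    also have "\<dots> \<le> U * (\<kappa> * (3 * Z * N))"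
    proof (rule mult_left_mono[OF _ U0])
      have "vnorm_inf m (mv n K ?y) \<le> vnorm2 m (mv n K ?y)" by (rule vnorm_inf_le_2)
      also have "\<dots> \<le> \<kappa> * vnorm2 n ?y" by (rule mnorm2_bound[OF nK])
      also have "\<dots> \<le> \<kappa> * (3 * Z * N)" using Y k1 by (intro mult_left_mono) auto
      finally show "vnorm_inf m (mv n K ?y) \<le> \<kappa> * (3 * Z * N)" .
    qed
    also have "\<dots> \<le> c1 * N"
    proof -
      have k6: "\<kappa>^6 = \<kappa> * \<kappa>^5" by (simp add: numeral_eq_Suc)
      have e: "3 * U * \<kappa> * Z = 3 * U * \<kappa>^6 * kB * (1/\<gamma>)^2 * wbar" by (simp add: Z_def k6 mult_ac)
      have Xt: "0 \<le> 3 * X * \<kappa>^5 * kB * (1/\<gamma>)^2 * wbar" using X0 k1 kB1 wb g0 by simp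
      have "3 * U * \<kappa> * Z \<le> c1" unfolding c1_def e using Xt by linarith
      from mult_right_mono[OF this N0] show ?thesis by (simp add: mult_ac)
    qed
    finally show ?thesis using P1 by simp
  qed
  have NH: "c1 * N \<le> c1 * real n * sqrt (real m) * real H * (1 - \<gamma>)^H"
  proof -
    have "c1 * N * 1 \<le> c1 * N * real H" using H1 c1pos N0 by (intro mult_left_mono) auto
    then show ?thesis unfolding N_def by (simp add: mult_ac)
  qed
  show "let c1 = (\<lambda>X U k b g w. 1 + 3 * X * k^5 * b * g^2 * w + 3 * U * k^6 * b * g^2 * w)
            (mnorm_inf kx n Dx) (mnorm_inf ku m Du) \<kappa> (max (mnorm2 n m B) 1) (1 / \<gamma>) wbar;
           \<epsilon>1 = c1 * real n * sqrt (real m) * real H * (1 - \<gamma>)^H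
       in 0 < c1 \<and>
          (\<forall>(w::nat \<Rightarrow> vec) (t::nat). (\<forall>k. vnorm_inf n (w k) \<le> wbar) \<longrightarrow>
             vnorm_inf kx (mv n Dx (mv n (mpow n (AK m A B K) H)
                 (state_shift n m A B K H M w t))) \<le> \<epsilon>1 \<and>
             vnorm_inf ku (mv m Du (mv n K (mv n (mpow n (AK m A B K) H)
                 (state_shift n m A B K H M w t)))) \<le> \<epsilon>1)"
    unfolding Let_def c1_def[symmetric, unfolded X_def U_def kB_def]
    using c1pos main NH by (meson order_trans)
qed

end
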